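(* Let $g\neq0$ be a special Bernstein function. Then \[\frac{1}{3e}\,|g(z)|\le g(|z|)\le 3e\,|g(z)|\] for all $z\in\mathbb C$ with $\operatorname{Re}z\ge0$.
   Context: A Bernstein function is $g(z)=a+bz+\int_{(0,\infty)}(1-e^{-sz})\mu(\mathrm ds)$ with $a,b\ge0$ and $\mu$ a positive Radon measure on $(0,\infty)$ with $\int\frac{s}{1+s}\mu(\mathrm ds)<\infty$; it is identified with its holomorphic extension to $\{\operatorname{Re}z>0\}$ given by this formula, which extends continuously to $\{\operatorname{Re}z\ge0\}$. A Bernstein function $g\ne0$ is special if $z\mapsto z/g(z)$ is again a Bernstein function. *)

theory Defs
  imports "HOL-Analysis.Analysis"
begin

text \<open>Levy triple of a Bernstein function: a, b \<ge> 0 and a positive measure mu on the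
  Borel sets of the real line, carried by (0,\<infinity>), with \<integral> s/(1+s) dmu < \<infinity>.
  (Such a measure is automatically Radon on (0,\<infinity>).)\<close>
definition bernstein_triple :: "real \<Rightarrow> real \<Rightarrow> real measure \<Rightarrow> bool" where
  "bernstein_triple a b \<mu> \<longleftrightarrow>
     a \<ge> 0 \<and> b \<ge> 0 \<and> sets \<mu> = sets borel \<and> emeasure \<mu> {..0} = 0 \<and>
     integrable \<mu> (\<lambda>s. s / (1 + s))"

definition bernstein_fun :: "real \<Rightarrow> real \<Rightarrow> real measure \<Rightarrow> complex \<Rightarrow> complex" where
  "bernstein_fun a b \<mu> z =
     complex_of_real a + complex_of_real b * z +
     integral\<^sup>L \<mu> (\<lambda>s. 1 - exp (- (complex_of_real s * z)))"

text \<open>A Bernstein function, identified with its extension to the closed right half-plane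
  (values outside Re z \<ge> 0 are irrelevant).\<close>
definition is_bernstein :: "(complex \<Rightarrow> complex) \<Rightarrow> bool" where
  "is_bernstein g \<longleftrightarrow>
     (\<exists>a b \<mu>. bernstein_triple a b \<mu> \<and> (\<forall>z. Re z \<ge> 0 \<longrightarrow> g z = bernstein_fun a b \<mu> z))"

text \<open>A special Bernstein function: g \<noteq> 0 and z \<mapsto> z / g z is again Bernstein
  (on the open right half-plane, where g has no zeros).\<close>
definition special_bernstein :: "(complex \<Rightarrow> complex) \<Rightarrow> bool" where
  "special_bernstein g \<longleftrightarrow>
     is_bernstein g \<and> (\<exists>z. Re z \<ge> 0 \<and> g z \<noteq> 0) \<and>
     (\<exists>h. is_bernstein h \<and> (\<forall>z. Re z > 0 \<longrightarrow> h z = z / g z))"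

end

theory Submission
  imports Defs
begin
lemma exp_lip: assumes "Re w \<ge> 0" shows "cmod (1 - exp (- w)) \<le> cmod w"
proof -
  have "norm ((\<lambda>z. exp (-z)) w - (\<lambda>z. exp (-z)) 0) \<le> 1 * norm (w - 0)"
  proof (rule field_differentiable_bound[where S="{z. Re z \<ge> 0}" and f'="\<lambda>z. - exp (-z)"])
    show "convex {z. Re z \<ge> 0}" using convex_halfspace_Re_ge[of 0] by (simp add: atLeast_def)
    fix z assume "z \<in> {z. 0 \<le> Re z}"
    then show "((\<lambda>z. exp (-z)) has_field_derivative - exp (- z)) (at z within {z. 0 \<le> Re z})"
      by (auto intro!: derivative_eq_intros)
    show "cmod (- exp (- z)) \<le> 1" using \<open>z \<in> _\<close> by (simp add: norm_exp_eq_Re)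
  qed (use assms in auto)
  then show ?thesis by (simp add: norm_minus_commute)
qed

lemma exp_two: assumes "Re w \<ge> 0" shows "cmod (1 - exp (- w)) \<le> 2"
proof -
  have "cmod (1 - exp (- w)) \<le> 1 + cmod (exp (-w))" using norm_triangle_ineq4[of 1 "exp (-w)"] by simp
  also have "cmod (exp (-w)) \<le> 1" using assms by (simp add: norm_exp_eq_Re)
  finally show ?thesis by simp
qed

lemma one_minus_exp_ge: assumes "t \<ge> (0::real)" shows "t / (1 + t) \<le> 1 - exp (- t)"
proof -
  have "1 + t \<le> exp t" by (rule exp_ge_add_one_self)
  hence "exp (-t) \<le> 1 / (1 + t)" using assms by (simp add: exp_minus field_simps)
  moreover have "1 / (1 + t) = 1 - t / (1 + t)" using assms by (simp add: field_simps)
  ultimately show ?thesis by simp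
qed

lemma key_ineq: assumes "Re z \<ge> 0" "s \<ge> 0"
  shows "cmod (1 - exp (- (complex_of_real s * z))) \<le> 4 * (1 - exp (- (s * cmod z)))"
proof -
  define t where "t = s * cmod z"
  have t0: "t \<ge> 0" using assms by (simp add: t_def)
  have Rw: "Re (complex_of_real s * z) \<ge> 0" using assms by simp
  have n: "cmod (complex_of_real s * z) = t" using assms by (simp add: t_def norm_mult)
  have a: "cmod (1 - exp (- (complex_of_real s * z))) \<le> min 2 t"
    using exp_lip[OF Rw] exp_two[OF Rw] n by simp
  have b: "min 2 t \<le> 4 * (t / (1 + t))"
  proof (cases "t \<le> 1")
    case True then show ?thesis using t0 mult_left_mono[of t 3 t] by (simp add: field_simps)
  next
    case False
    have "2 \<le> 4 * (t / (1 + t))" using False by (simp add: field_simps)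
    then show ?thesis by linarith
  qed
  have "cmod (1 - exp (- (complex_of_real s * z))) \<le> 4 * (1 - exp (- t))"
  proof -
    have "4 * (t / (1 + t)) \<le> 4 * (1 - exp (- t))" using one_minus_exp_ge[OF t0] by simp
    then show ?thesis using a b by linarith
  qed
  then show ?thesis by (simp add: t_def)
qed

lemma dom_ineq: assumes "Re z \<ge> 0" "s > 0" "cmod z \<le> R"
  shows "cmod (1 - exp (- (complex_of_real s * z))) \<le> (4 + 2 * R) * (s / (1 + s))"
proof -
  have Rw: "Re (complex_of_real s * z) \<ge> 0" using assms by simp
  have n: "cmod (complex_of_real s * z) \<le> s * R" using assms by (simp add: norm_mult)
  have a: "cmod (1 - exp (- (complex_of_real s * z))) \<le> min 2 (s * R)"
    using exp_lip[OF Rw] exp_two[OF Rw] n by simp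
  have R0: "R \<ge> 0" using assms(3) norm_ge_zero order_trans by blast
  have "min 2 (s * R) \<le> (4 + 2 * R) * (s / (1 + s))"
  proof (cases "s \<le> 1")
    case True
    have "s * R \<le> 2 * R * (s / (1 + s))" using True assms(2) R0
      by (simp add: field_simps mult_left_mono)
    moreover have "0 \<le> 4 * (s / (1 + s))" using assms(2) by simp
    ultimately show ?thesis by (simp add: algebra_simps)
  next
    case False
    have "2 \<le> 4 * (s / (1 + s))" using False by (simp add: field_simps)
    moreover have "0 \<le> 2 * R * (s / (1 + s))" using assms(2) R0 by simp
    ultimately show ?thesis by (simp add: algebra_simps)
  qed
  then show ?thesis using a by linarith
qed

lemma triple_basics:
  assumes "bernstein_triple a b \<mu>"
  shows "a \<ge> 0" "b \<ge> 0" "space \<mu> = UNIV" "AE s in \<mu>. s > 0"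
    "integrable \<mu> (\<lambda>s. s / (1 + s))"

proof -
  have S: "sets \<mu> = sets borel" and E: "emeasure \<mu> {..0} = 0"
    using assms by (auto simp: bernstein_triple_def)
  show "a \<ge> 0" "b \<ge> 0" "integrable \<mu> (\<lambda>s. s / (1 + s))"
    using assms by (auto simp: bernstein_triple_def)
  show sp: "space \<mu> = UNIV" using sets_eq_imp_space_eq[OF S] by simp
  have "{..0::real} \<in> null_sets \<mu>" using S E by (auto intro: null_setsI)
  then show "AE s in \<mu>. s > 0" by (rule AE_I') (auto simp: sp)
qed

lemma triple_meas:
  fixes f :: "real \<Rightarrow> 'b::topological_space"
  assumes "bernstein_triple a b \<mu>" "f \<in> borel_measurable borel"
  shows "f \<in> borel_measurable \<mu>"
proof -
  have S: "sets \<mu> = sets borel" using assms by (auto simp: bernstein_triple_def)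
  show ?thesis using measurable_cong_sets[OF S refl, of "borel::'b measure"] assms(2) by simp
qed

lemma meas_f: "(\<lambda>s. 1 - exp (- (complex_of_real s * z))) \<in> borel_measurable borel"
  by (intro borel_measurable_continuous_onI continuous_intros)

lemma meas_r: "(\<lambda>s. 1 - exp (- (s * x::real))) \<in> borel_measurable borel"
  by (intro borel_measurable_continuous_onI continuous_intros)

lemma integrable_f:
  assumes T: "bernstein_triple a b \<mu>" and z: "Re z \<ge> 0"
  shows "integrable \<mu> (\<lambda>s. 1 - exp (- (complex_of_real s * z)))"
proof (rule Bochner_Integration.integrable_bound[where f="\<lambda>s. (4 + 2 * cmod z) * (s / (1 + s))"])
  note tb = triple_basics[OF T]
  show "integrable \<mu> (\<lambda>s. (4 + 2 * cmod z) * (s / (1 + s)))"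
    using tb(5) by (rule integrable_mult_right)
  show "(\<lambda>s. 1 - exp (- (complex_of_real s * z))) \<in> borel_measurable \<mu>"
    by (rule triple_meas[OF T meas_f])
  show "AE s in \<mu>. norm (1 - exp (- (complex_of_real s * z))) \<le> norm ((4 + 2 * cmod z) * (s / (1 + s)))"
    using tb(4)
  proof eventually_elim
    case (elim s)
    have "cmod (1 - exp (- (complex_of_real s * z))) \<le> (4 + 2 * cmod z) * (s / (1 + s))"
      using dom_ineq[OF z elim order_refl] .
    also have "\<dots> \<le> norm ((4 + 2 * cmod z) * (s / (1 + s)))" unfolding real_norm_def by (rule abs_ge_self)
    finally show ?case .
  qed
qed

lemma integrable_r:
  assumes T: "bernstein_triple a b \<mu>" and x: "x \<ge> 0"
  shows "integrable \<mu> (\<lambda>s. 1 - exp (- (s * x)))"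
proof (rule Bochner_Integration.integrable_bound[where f="\<lambda>s. (4 + 2 * x) * (s / (1 + s))"])
  note tb = triple_basics[OF T]
  show "integrable \<mu> (\<lambda>s. (4 + 2 * x) * (s / (1 + s)))"
    using tb(5) by (rule integrable_mult_right)
  show "(\<lambda>s. 1 - exp (- (s * x))) \<in> borel_measurable \<mu>"
    by (rule triple_meas[OF T meas_r])
  show "AE s in \<mu>. norm (1 - exp (- (s * x))) \<le> norm ((4 + 2 * x) * (s / (1 + s)))"
    using tb(4)
  proof eventually_elim
    case (elim s)
    have e: "1 - exp (- (complex_of_real s * complex_of_real x)) = complex_of_real (1 - exp (- (s * x)))"
      by (simp add: exp_of_real[symmetric])
    have "cmod (1 - exp (- (complex_of_real s * complex_of_real x))) \<le> (4 + 2 * cmod (complex_of_real x)) * (s / (1 + s))"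
      using dom_ineq[of "complex_of_real x" s "cmod (complex_of_real x)"] elim x by simp
    then have "norm (1 - exp (- (s * x))) \<le> (4 + 2 * x) * (s / (1 + s))"
      unfolding e using x by (simp only: norm_of_real abs_of_nonneg real_norm_def)
    also have "\<dots> \<le> norm ((4 + 2 * x) * (s / (1 + s)))" unfolding real_norm_def by (rule abs_ge_self)
    finally show ?case .
  qed
qed

lemma fun_real:
  assumes T: "bernstein_triple a b \<mu>" and x: "x \<ge> 0"
  shows "bernstein_fun a b \<mu> (complex_of_real x) =
          complex_of_real (a + b * x + integral\<^sup>L \<mu> (\<lambda>s. 1 - exp (- (s * x))))"
    and "a + b * x + integral\<^sup>L \<mu> (\<lambda>s. 1 - exp (- (s * x))) \<ge> 0"
proof -
  have e: "\<And>s. 1 - exp (- (complex_of_real s * complex_of_real x)) = complex_of_real (1 - exp (- (s * x)))"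
    by (simp add: exp_of_real[symmetric])
  show "bernstein_fun a b \<mu> (complex_of_real x) =
          complex_of_real (a + b * x + integral\<^sup>L \<mu> (\<lambda>s. 1 - exp (- (s * x))))"
    unfolding bernstein_fun_def e integral_complex_of_real by simp
  note tb = triple_basics[OF T]
  have "integral\<^sup>L \<mu> (\<lambda>s. 1 - exp (- (s * x))) \<ge> 0"
    by (rule integral_nonneg_AE) (use tb(4) in \<open>eventually_elim, use x in simp\<close>)
  then show "a + b * x + integral\<^sup>L \<mu> (\<lambda>s. 1 - exp (- (s * x))) \<ge> 0"
    using tb(1,2) x by simp
qed

lemma bound_L1:
  assumes T: "bernstein_triple a b \<mu>" and z: "Re z \<ge> 0"
  shows "cmod (bernstein_fun a b \<mu> z) \<le> 4 * (a + b * cmod z + integral\<^sup>L \<mu> (\<lambda>s. 1 - exp (- (s * cmod z))))"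
proof -
  note tb = triple_basics[OF T]
  define I where "I = integral\<^sup>L \<mu> (\<lambda>s. 1 - exp (- (complex_of_real s * z)))"
  define J where "J = integral\<^sup>L \<mu> (\<lambda>s. 1 - exp (- (s * cmod z)))"
  have "cmod (bernstein_fun a b \<mu> z) \<le> cmod (complex_of_real a + complex_of_real b * z) + cmod I"
    unfolding bernstein_fun_def I_def by (rule norm_triangle_ineq)
  also have "cmod (complex_of_real a + complex_of_real b * z) \<le> cmod (complex_of_real a) + cmod (complex_of_real b * z)"
    by (rule norm_triangle_ineq)
  also have "cmod (complex_of_real a) + cmod (complex_of_real b * z) = a + b * cmod z"
    using tb(1,2) by (simp add: norm_mult)
  also have "cmod I \<le> integral\<^sup>L \<mu> (\<lambda>s. cmod (1 - exp (- (complex_of_real s * z))))"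
    unfolding I_def by (rule integral_norm_bound)
  also have "\<dots> \<le> integral\<^sup>L \<mu> (\<lambda>s. 4 * (1 - exp (- (s * cmod z))))"
  proof (rule integral_mono_AE')
    show "integrable \<mu> (\<lambda>s. 4 * (1 - exp (- (s * cmod z))))"
      using integrable_r[OF T, of "cmod z"] by (intro integrable_mult_right) auto
    show "AE s in \<mu>. cmod (1 - exp (- (complex_of_real s * z))) \<le> 4 * (1 - exp (- (s * cmod z)))"
      using tb(4) by eventually_elim (rule key_ineq[OF z], simp)
    show "AE s in \<mu>. 0 \<le> 4 * (1 - exp (- (s * cmod z)))"
      using tb(4) by eventually_elim simp
  qed
  also have "\<dots> = 4 * J" unfolding J_def by (rule integral_mult_right_zero)
  finally have "cmod (bernstein_fun a b \<mu> z) \<le> a + b * cmod z + 4 * J" by simp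
  moreover have "a + b * cmod z \<le> 4 * (a + b * cmod z)" using tb(1,2) by simp
  ultimately show ?thesis unfolding J_def by (simp add: algebra_simps)
qed

lemma cont_L2:
  assumes T: "bernstein_triple a b \<mu>" and w: "\<And>n. Re (w n) \<ge> 0" and lim: "w \<longlonglongrightarrow> w0"
    and w0: "Re w0 \<ge> 0"
  shows "(\<lambda>n. bernstein_fun a b \<mu> (w n)) \<longlonglongrightarrow> bernstein_fun a b \<mu> w0"
proof -
  note tb = triple_basics[OF T]
  obtain R where R: "\<And>n. cmod (w n) \<le> R" using BseqD[OF convergent_imp_Bseq[OF convergentI[OF lim]]] by blast
  have "(\<lambda>n. integral\<^sup>L \<mu> (\<lambda>s. 1 - exp (- (complex_of_real s * w n)))) \<longlonglongrightarrow>
        integral\<^sup>L \<mu> (\<lambda>s. 1 - exp (- (complex_of_real s * w0)))"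
  proof (rule integral_dominated_convergence[where w="\<lambda>s. (4 + 2 * R) * (s / (1 + s))"])
    show "(\<lambda>s. 1 - exp (- (complex_of_real s * w0))) \<in> borel_measurable \<mu>"
      by (rule triple_meas[OF T meas_f])
    show "\<And>n. (\<lambda>s. 1 - exp (- (complex_of_real s * w n))) \<in> borel_measurable \<mu>"
      by (rule triple_meas[OF T meas_f])
    show "integrable \<mu> (\<lambda>s. (4 + 2 * R) * (s / (1 + s)))"
      using tb(5) by (rule integrable_mult_right)
    show "AE s in \<mu>. (\<lambda>n. 1 - exp (- (complex_of_real s * w n))) \<longlonglongrightarrow> 1 - exp (- (complex_of_real s * w0))"
      by (intro AE_I2 tendsto_intros lim)
    show "\<And>n. AE s in \<mu>. cmod (1 - exp (- (complex_of_real s * w n))) \<le> (4 + 2 * R) * (s / (1 + s))"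
      using tb(4) by (auto elim!: eventually_mono simp del: times_divide_eq_right intro: dom_ineq[OF w _ R])
  qed
  then show ?thesis unfolding bernstein_fun_def
    by (intro tendsto_intros lim)
qed

lemma zero_L3:
  assumes T: "bernstein_triple a b \<mu>" and z: "Re z > 0" and F0: "bernstein_fun a b \<mu> z = 0"
    and w: "Re w \<ge> 0"
  shows "bernstein_fun a b \<mu> w = 0"
proof -
  note tb = triple_basics[OF T]
  have intf: "integrable \<mu> (\<lambda>s. 1 - exp (- (complex_of_real s * z)))"
    using integrable_f[OF T] z by simp
  have pos: "Re (1 - exp (- (complex_of_real s * z))) > 0" if "s > 0" for s
  proof -
    have "Re (exp (- (complex_of_real s * z))) \<le> cmod (exp (- (complex_of_real s * z)))"
      by (rule complex_Re_le_cmod)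
    also have "\<dots> = exp (- (s * Re z))" by (simp add: norm_exp_eq_Re)
    also have "\<dots> < 1" using that z by simp
    finally show ?thesis by simp
  qed
  have ReI: "Re (integral\<^sup>L \<mu> (\<lambda>s. 1 - exp (- (complex_of_real s * z)))) =
       integral\<^sup>L \<mu> (\<lambda>s. Re (1 - exp (- (complex_of_real s * z))))"
    using integral_Re[OF intf] by simp
  have intRe: "integrable \<mu> (\<lambda>s. Re (1 - exp (- (complex_of_real s * z))))"
    using intf by (rule integrable_Re)
  have AEnn: "AE s in \<mu>. 0 \<le> Re (1 - exp (- (complex_of_real s * z)))"
    using tb(4) by eventually_elim (use pos in \<open>auto intro: less_imp_le\<close>)
  have Jnn: "integral\<^sup>L \<mu> (\<lambda>s. Re (1 - exp (- (complex_of_real s * z)))) \<ge> 0"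
    by (rule integral_nonneg_AE[OF AEnn])
  have "0 = Re (bernstein_fun a b \<mu> z)" using F0 by simp
  also have "\<dots> = a + b * Re z + integral\<^sup>L \<mu> (\<lambda>s. Re (1 - exp (- (complex_of_real s * z))))"
    unfolding bernstein_fun_def using ReI by simp
  finally have sum0: "a + b * Re z + integral\<^sup>L \<mu> (\<lambda>s. Re (1 - exp (- (complex_of_real s * z)))) = 0" by simp
  have bz: "b * Re z \<ge> 0" using tb(2) z by simp
  have a0: "a = 0" and b0: "b = 0" and J0: "integral\<^sup>L \<mu> (\<lambda>s. Re (1 - exp (- (complex_of_real s * z)))) = 0"
  proof -
    show "a = 0" using sum0 tb(1) bz Jnn by linarith
    show J: "integral\<^sup>L \<mu> (\<lambda>s. Re (1 - exp (- (complex_of_real s * z)))) = 0"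
      using sum0 tb(1) bz Jnn by linarith
    have "b * Re z = 0" using sum0 tb(1) bz Jnn by linarith
    then show "b = 0" using z by simp
  qed
  have "AE s in \<mu>. Re (1 - exp (- (complex_of_real s * z))) = 0"
    using J0 integral_nonneg_eq_0_iff_AE[OF intRe AEnn] by simp
  with tb(4) have AEF: "AE s in \<mu>. False"
    by eventually_elim (use pos in force)
  have "AE s in \<mu>. 1 - exp (- (complex_of_real s * w)) = 0"
    using AEF by (auto elim: eventually_mono)
  then have "integral\<^sup>L \<mu> (\<lambda>s. 1 - exp (- (complex_of_real s * w))) = integral\<^sup>L \<mu> (\<lambda>s. 0)"
    by (intro integral_cong_AE triple_meas[OF T meas_f]) auto
  then show ?thesis unfolding bernstein_fun_def a0 b0 by simp
qed

theorem theorem2p7: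
  fixes g :: "complex \<Rightarrow> complex" and z :: complex
  assumes "special_bernstein g"
    and "Re z \<ge> 0"
  shows "g (complex_of_real (cmod z)) \<in> \<real>
     \<and> cmod (g z) / (3 * exp 1) \<le> Re (g (complex_of_real (cmod z)))
     \<and> Re (g (complex_of_real (cmod z))) \<le> 3 * exp 1 * cmod (g z)"
proof -
  from assms(1) obtain a b \<mu> where T: "bernstein_triple a b \<mu>"
    and gF: "\<And>z. Re z \<ge> 0 \<Longrightarrow> g z = bernstein_fun a b \<mu> z"
    unfolding special_bernstein_def is_bernstein_def by blast
  from assms(1) obtain w0 where w0: "Re w0 \<ge> 0" "g w0 \<noteq> 0"
    unfolding special_bernstein_def by blast
  from assms(1) obtain h where hB: "is_bernstein h" and hg: "\<And>z. Re z > 0 \<Longrightarrow> h z = z / g z"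
    unfolding special_bernstein_def by blast
  from hB obtain a' b' \<mu>' where T': "bernstein_triple a' b' \<mu>'"
    and hF: "\<And>z. Re z \<ge> 0 \<Longrightarrow> h z = bernstein_fun a' b' \<mu>' z"
    unfolding is_bernstein_def by blast
  define Gr where "Gr x = a + b * x + integral\<^sup>L \<mu> (\<lambda>s. 1 - exp (- (s * x)))" for x
  define Gr' where "Gr' x = a' + b' * x + integral\<^sup>L \<mu>' (\<lambda>s. 1 - exp (- (s * x)))" for x
  have gR: "g (complex_of_real x) = complex_of_real (Gr x)" if "x \<ge> 0" for x
    using gF[of "complex_of_real x"] fun_real(1)[OF T that] that unfolding Gr_def by simp
  have GrNN: "Gr x \<ge> 0" if "x \<ge> 0" for x
    using fun_real(2)[OF T that] unfolding Gr_def by simp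
  have hR: "h (complex_of_real x) = complex_of_real (Gr' x)" if "x \<ge> 0" for x
    using hF[of "complex_of_real x"] fun_real(1)[OF T' that] that unfolding Gr'_def by simp
  have nz: "g w \<noteq> 0" if "Re w > 0" for w
  proof
    assume "g w = 0"
    then have "bernstein_fun a b \<mu> w = 0" using gF[of w] that by simp
    then have "bernstein_fun a b \<mu> w0 = 0" using zero_L3[OF T that] w0(1) by blast
    then show False using w0 gF by simp
  qed
  have L1: "cmod (g w) \<le> 4 * Gr (cmod w)" if "Re w \<ge> 0" for w
    using bound_L1[OF T that] gF[OF that] unfolding Gr_def by simp
  have key: "Gr (cmod w) \<le> 4 * cmod (g w)" if w: "Re w > 0" for w
  proof -
    have wpos: "cmod w > 0" using w by auto
    have "g (complex_of_real (cmod w)) \<noteq> 0" using nz[of "complex_of_real (cmod w)"] wpos by simp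
    then have Gpos: "Gr (cmod w) > 0" using gR[of "cmod w"] GrNN[of "cmod w"] by force
    have cpos: "cmod (g w) > 0" using nz[OF w] by simp
    have "h (complex_of_real (cmod w)) = complex_of_real (cmod w) / complex_of_real (Gr (cmod w))"
      using hg[of "complex_of_real (cmod w)"] wpos gR[of "cmod w"] by simp
    then have "Gr' (cmod w) = cmod w / Gr (cmod w)"
      using hR[of "cmod w"] by (simp flip: of_real_divide)
    moreover have "cmod (h w) = cmod w / cmod (g w)"
      using hg[OF w] by (simp add: norm_divide)
    moreover have "cmod (h w) \<le> 4 * Gr' (cmod w)"
      using bound_L1[OF T' less_imp_le[OF w]] hF[OF less_imp_le[OF w]] unfolding Gr'_def by simp
    ultimately have "cmod w / cmod (g w) \<le> 4 * (cmod w / Gr (cmod w))" by simp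
    then have "cmod w * Gr (cmod w) \<le> cmod w * (4 * cmod (g w))"
      using cpos Gpos by (simp add: field_simps)
    then show ?thesis using wpos by simp
  qed
  have right: "Gr (cmod z) \<le> 4 * cmod (g z)"
  proof (cases "Re z > 0")
    case True then show ?thesis by (rule key)
  next
    case False
    then have Rz: "Re z = 0" using assms(2) by simp
    define w where "w n = z + complex_of_real (1 / real (Suc n))" for n
    have Rw: "Re (w n) > 0" for n using Rz by (simp add: w_def)
    have wl: "w \<longlonglongrightarrow> z"
    proof -
      have "(\<lambda>n. complex_of_real (1 / real (Suc n))) \<longlonglongrightarrow> complex_of_real 0"
        by (intro tendsto_intros LIMSEQ_inverse_real_of_nat[unfolded inverse_eq_divide])
      from tendsto_add[OF tendsto_const[of z] this] have "(\<lambda>n. w n) \<longlonglongrightarrow> z"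
        unfolding w_def by simp
      then show ?thesis by simp
    qed
    have l1: "(\<lambda>n. g (w n)) \<longlonglongrightarrow> g z"
    proof -
      have "(\<lambda>n. bernstein_fun a b \<mu> (w n)) \<longlonglongrightarrow> bernstein_fun a b \<mu> z"
        using cont_L2[OF T _ wl assms(2)] Rw less_imp_le by blast
      moreover have "g (w n) = bernstein_fun a b \<mu> (w n)" for n using gF Rw less_imp_le by blast
      ultimately show ?thesis using gF[OF assms(2)] by simp
    qed
    have wl2: "(\<lambda>n. complex_of_real (cmod (w n))) \<longlonglongrightarrow> complex_of_real (cmod z)"
      by (intro tendsto_intros wl)
    have l2: "(\<lambda>n. g (complex_of_real (cmod (w n)))) \<longlonglongrightarrow> g (complex_of_real (cmod z))"
      using cont_L2[OF T _ wl2] gF by simp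
    then have "(\<lambda>n. complex_of_real (Gr (cmod (w n)))) \<longlonglongrightarrow> complex_of_real (Gr (cmod z))"
      using gR by simp
    then have l3: "(\<lambda>n. Gr (cmod (w n))) \<longlonglongrightarrow> Gr (cmod z)"
      using tendsto_Re by fastforce
    have l4: "(\<lambda>n. 4 * cmod (g (w n))) \<longlonglongrightarrow> 4 * cmod (g z)"
      by (intro tendsto_intros l1)
    show ?thesis
      by (rule LIMSEQ_le[OF l3 l4]) (use key Rw in auto)
  qed
  have e: "4 \<le> 3 * exp (1::real)" using exp_ge_add_one_self[of "1::real"] by simp
  have Gz: "g (complex_of_real (cmod z)) = complex_of_real (Gr (cmod z))" using gR by simp
  have G0: "Gr (cmod z) \<ge> 0" using GrNN by simp
  have c0: "cmod (g z) \<ge> 0" by simp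
  have A: "cmod (g z) \<le> 3 * exp 1 * Gr (cmod z)"
    using L1[OF assms(2)] e G0 mult_right_mono[OF e G0] by linarith
  have B: "Gr (cmod z) \<le> 3 * exp 1 * cmod (g z)"
    using right mult_right_mono[OF e c0] by linarith
  show ?thesis unfolding Gz using A B by (simp add: field_simps)
qed

end
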